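(* Let $k>0$, $M>0$, $\beta\in\,]0,\tfrac12[$, and let $f\ge0$ be spherically symmetric with $f\in\tilde{\mathcal A}_{M,\beta}$. Then there is a spherically symmetric function $\hat f\ge0$ such that $\rho_{\hat f}=\rho_f$ (in particular $\hat f\in\tilde{\mathcal A}_{M,\beta}$), $\mathcal D(\hat f)\le\mathcal D(f)$, and $\hat f(x,v)\le1$ for all $(x,v)\in\mathbb R^3\times\mathbb R^3$.
   Context: Let $\chi(s)=\frac{k}{k+1}s^{1+1/k}$. A measurable $f\ge0$ on $\mathbb R^3\times\mathbb R^3$ is spherically symmetric if $f(Ax,Av)=f(x,v)$ for all $A\in SO(3)$. For such $f$: $\rho_f(x)=\int\sqrt{1+|v|^2}f(x,v)\,dv$ (radial, written $\rho_f(r)$), $m_f(r)=\int_{|x|\le r}\int\sqrt{1+|v|^2}f\,dx\,dv$, $\lambda_f$ given by $e^{-2\lambda_f(r)}=1-2m_f(r)/r$, and $\mathcal D(f)=\int\int e^{\lambda_f(|x|)}(\chi(f)-f)\,dx\,dv$. $\tilde{\mathcal A}_{M,\beta}$ is the set of measurable spherically symmetric $f\ge0$ with $\int\int\sqrt{1+|v|^2}f\,dx\,dv=M$, $m_f(r)/r\le\beta$ for $r\in\,]0,\infty[$, and $\rho_f(r)\le1$ for $r\in[0,\infty[$. *)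

theory Defs
  imports "HOL-Analysis.Analysis"
begin

definition chi :: "real \<Rightarrow> real \<Rightarrow> real" where
  "chi k s = k / (k + 1) * s powr (1 + 1 / k)"

definition sph_sym :: "(real^3 \<Rightarrow> real^3 \<Rightarrow> real) \<Rightarrow> bool" where
  "sph_sym f \<longleftrightarrow> (\<forall>A :: real^3^3. orthogonal_matrix A \<and> det A = 1 \<longrightarrow>
      (\<forall>x v. f (A *v x) (A *v v) = f x v))"

definition meas_density :: "(real^3 \<Rightarrow> real^3 \<Rightarrow> real) \<Rightarrow> bool" where
  "meas_density f \<longleftrightarrow> (\<lambda>z :: (real^3) \<times> (real^3). f (fst z) (snd z)) \<in> borel_measurable lebesgue"

definition rho :: "(real^3 \<Rightarrow> real^3 \<Rightarrow> real) \<Rightarrow> real^3 \<Rightarrow> ennreal" where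
  "rho f x = (\<integral>\<^sup>+ v. ennreal (sqrt (1 + (norm v)\<^sup>2) * f x v) \<partial>lebesgue)"

definition mass_in :: "(real^3 \<Rightarrow> real^3 \<Rightarrow> real) \<Rightarrow> real \<Rightarrow> ennreal" where
  "mass_in f r = (\<integral>\<^sup>+ z. ennreal (sqrt (1 + (norm (snd z))\<^sup>2) * f (fst z) (snd z))
       * indicator (cball 0 r) (fst z) \<partial>(lebesgue :: ((real^3) \<times> (real^3)) measure))"

definition total_mass :: "(real^3 \<Rightarrow> real^3 \<Rightarrow> real) \<Rightarrow> ennreal" where
  "total_mass f = (\<integral>\<^sup>+ z. ennreal (sqrt (1 + (norm (snd z))\<^sup>2) * f (fst z) (snd z))
       \<partial>(lebesgue :: ((real^3) \<times> (real^3)) measure))"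

text \<open>e^{lambda_f(r)} where e^{-2 lambda_f(r)} = 1 - 2 m_f(r)/r; at r = 0 we take lambda = 0.\<close>
definition exp_lambda :: "(real^3 \<Rightarrow> real^3 \<Rightarrow> real) \<Rightarrow> real \<Rightarrow> real" where
  "exp_lambda f r = (if r = 0 then 1 else 1 / sqrt (1 - 2 * enn2real (mass_in f r) / r))"

text \<open>D(f) = \<integral>\<integral> e^lambda chi(f) - \<integral>\<integral> e^lambda f, as an extended real
  (the second integral is finite on the admissible set).\<close>
definition Dfun :: "real \<Rightarrow> (real^3 \<Rightarrow> real^3 \<Rightarrow> real) \<Rightarrow> ereal" where
  "Dfun k f =
     enn2ereal (\<integral>\<^sup>+ z. ennreal (exp_lambda f (norm (fst z)) * chi k (f (fst z) (snd z)))
        \<partial>(lebesgue :: ((real^3) \<times> (real^3)) measure))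
   - enn2ereal (\<integral>\<^sup>+ z. ennreal (exp_lambda f (norm (fst z)) * f (fst z) (snd z))
        \<partial>(lebesgue :: ((real^3) \<times> (real^3)) measure))"

definition A_tilde :: "real \<Rightarrow> real \<Rightarrow> (real^3 \<Rightarrow> real^3 \<Rightarrow> real) set" where
  "A_tilde M \<beta> = {f. meas_density f \<and> sph_sym f \<and> (\<forall>x v. 0 \<le> f x v) \<and>
      total_mass f = ennreal M \<and>
      (\<forall>r>0. mass_in f r \<le> ennreal (\<beta> * r)) \<and>
      (\<forall>x. rho f x \<le> 1)}"

end

theory Submission
  imports Defs
begin


lemma chi_ineq:
  fixes k s a :: real
  assumes k: "k > 0" and s: "s \<ge> 0" and a: "a > 0"
  shows "chi k ((max 0 (1 - a)) powr k) + s + a * ((max 0 (1 - a)) powr k)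
         \<le> chi k s + ((max 0 (1 - a)) powr k) + a * s"
proof (cases "a \<ge> 1")
  case True
  then have "max 0 (1 - a) = 0" by simp
  moreover have "chi k s \<ge> 0" unfolding chi_def using k s by simp
  moreover have "s \<le> a * s" using True s mult_right_mono[of 1 a s] by simp
  moreover have "chi k 0 = 0" unfolding chi_def by simp
  ultimately show ?thesis by simp
next
  case False
  let ?b = "1 - a"
  have b: "?b > 0" using False by simp
  let ?t = "?b powr k"
  have mx: "max 0 ?b = ?b" using b by simp
  have Y: "s * ?b \<le> s powr (1 + 1/k) / (1 + 1/k) + ?b powr (k+1) / (k+1)"
    by (rule Youngs_inequality) (use k s b in \<open>auto simp: field_simps\<close>)
  have e1: "s powr (1 + 1/k) / (1 + 1/k) = chi k s"
    unfolding chi_def using k by (simp add: field_simps)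
  have e2: "?b powr (k+1) = ?t * ?b" using b by (simp add: powr_add)
  have e3: "chi k ?t = k/(k+1) * (?t * ?b)"
  proof -
    have "?t powr (1 + 1/k) = ?b powr (k * (1 + 1/k))" using b by (simp add: powr_powr)
    also have "k * (1 + 1/k) = k + 1" using k by (simp add: field_simps)
    finally show ?thesis unfolding chi_def using e2 by simp
  qed
  have "chi k ?t + s + a * ?t - (chi k s + ?t + a * s) = - (chi k s - s * ?b + ?t * ?b / (k+1))"
    using k by (simp add: e3 field_simps)
  moreover have "chi k s - s * ?b + ?t * ?b / (k+1) \<ge> 0" using Y e1 e2 by simp
  ultimately show ?thesis unfolding mx by linarith
qed



lemma measurable_completion_AE:
  assumes g: "g \<in> M \<rightarrow>\<^sub>M N" and ae: "AE x in M. f x = g x"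
    and sp: "\<And>x. x \<in> space M \<Longrightarrow> f x \<in> space N"
  shows "f \<in> completion M \<rightarrow>\<^sub>M N"
proof (rule measurableI)
  show "x \<in> space (completion M) \<Longrightarrow> f x \<in> space N" for x using sp by simp
  fix A assume A: "A \<in> sets N"
  have gA: "g -` A \<inter> space M \<in> sets M" using g A by (rule measurable_sets)
  show "f -` A \<inter> space (completion M) \<in> sets (completion M)"
  proof (rule completion.in_sets_AE[where A = "g -` A \<inter> space M"])
    show "AE x in completion M. (x \<in> g -` A \<inter> space M) = (x \<in> f -` A \<inter> space (completion M))"
      using AE_completion[OF ae] by (rule AE_mp) (auto intro!: AE_I2)
    show "g -` A \<inter> space M \<in> sets (completion M)" using gA by simp
    show "f -` A \<inter> space (completion M) \<subseteq> space (completion M)" by auto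
  qed
qed

lemma tonelli_leb:
  fixes F :: "'a::euclidean_space \<times> 'b::euclidean_space \<Rightarrow> ennreal"
  assumes F: "F \<in> borel_measurable lebesgue"
  shows "(\<integral>\<^sup>+z. F z \<partial>lebesgue) = (\<integral>\<^sup>+x. (\<integral>\<^sup>+v. F (x,v) \<partial>lebesgue) \<partial>lebesgue)"
    and "(\<lambda>x. \<integral>\<^sup>+v. F (x,v) \<partial>lebesgue) \<in> borel_measurable lebesgue"
    and "AE x in lebesgue. (\<lambda>v. F (x,v)) \<in> borel_measurable lebesgue"
proof -
  obtain G where G: "G \<in> borel_measurable lborel" "AE z in lborel. F z = G z"
    using completion_ex_borel_measurable[OF F] by auto
  have G2: "G \<in> borel_measurable (lborel \<Otimes>\<^sub>M lborel)" using G(1) by (simp add: lborel_prod)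
  have AE2: "AE x in lborel. AE v in lborel. F (x,v) = G (x,v)"
  proof -
    have "AE z in lborel \<Otimes>\<^sub>M lborel. F z = G z" using G(2) by (simp only: lborel_prod)
    from lborel_pair.AE_pair[OF this] show ?thesis by simp
  qed
  define IG where "IG x = (\<integral>\<^sup>+v. G (x,v) \<partial>lborel)" for x
  have IGm: "IG \<in> borel_measurable lborel"
    unfolding IG_def using lborel.borel_measurable_nn_integral_fst[OF G2] by simp
  have inner: "AE x in lborel. (\<integral>\<^sup>+v. F (x,v) \<partial>lebesgue) = IG x"
    using AE2 by eventually_elim (simp add: IG_def nn_integral_completion cong: nn_integral_cong_AE)
  have "(\<integral>\<^sup>+z. F z \<partial>lebesgue) = (\<integral>\<^sup>+z. G z \<partial>lborel)"
    using G(2) by (simp add: nn_integral_completion cong: nn_integral_cong_AE)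
  also have "\<dots> = (\<integral>\<^sup>+z. G z \<partial>(lborel \<Otimes>\<^sub>M lborel))" by (simp add: lborel_prod)
  also have "\<dots> = (\<integral>\<^sup>+x. IG x \<partial>lborel)"
    unfolding IG_def using lborel.nn_integral_fst[OF G2] by simp
  also have "\<dots> = (\<integral>\<^sup>+x. (\<integral>\<^sup>+v. F (x,v) \<partial>lebesgue) \<partial>lborel)"
    using inner by (intro nn_integral_cong_AE) auto
  also have "\<dots> = (\<integral>\<^sup>+x. (\<integral>\<^sup>+v. F (x,v) \<partial>lebesgue) \<partial>lebesgue)"
    by (simp add: nn_integral_completion)
  finally show "(\<integral>\<^sup>+z. F z \<partial>lebesgue) = (\<integral>\<^sup>+x. (\<integral>\<^sup>+v. F (x,v) \<partial>lebesgue) \<partial>lebesgue)" .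
  show "(\<lambda>x. \<integral>\<^sup>+v. F (x,v) \<partial>lebesgue) \<in> borel_measurable lebesgue"
    by (rule measurable_completion_AE[OF IGm inner]) auto
  show "AE x in lebesgue. (\<lambda>v. F (x,v)) \<in> borel_measurable lebesgue"
  proof (rule AE_completion)
    show "AE x in lborel. (\<lambda>v. F (x,v)) \<in> borel_measurable lebesgue"
      using AE2
    proof eventually_elim
      case (elim x)
      have "(\<lambda>v. G (x,v)) \<in> borel_measurable lborel"
        using G2 by (rule measurable_Pair2) simp
      then show ?case using elim by (rule measurable_completion_AE) auto
    qed
  qed
qed

lemma lift_fst_measurable:
  fixes q :: "'a::euclidean_space \<Rightarrow> real"
  assumes q: "q \<in> borel_measurable lebesgue"
  shows "(\<lambda>z::'a \<times> 'b::euclidean_space. q (fst z)) \<in> borel_measurable lebesgue"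
proof -
  obtain q' where q': "q' \<in> borel_measurable lborel" "AE x in lborel. q x = q' x"
    using completion_ex_borel_measurable_real[OF q] by auto
  obtain N where N: "N \<in> null_sets lborel" "{x \<in> space lborel. q x \<noteq> q' x} \<subseteq> N"
  proof -
    from q'(2) obtain N0 where "{x \<in> space lborel. \<not> q x = q' x} \<subseteq> N0" "emeasure lborel N0 = 0" "N0 \<in> sets lborel"
      by (rule AE_E)
    then show ?thesis using that[of N0] by (simp add: null_sets_def)
  qed
  have NT: "N \<times> (UNIV :: 'b set) \<in> null_sets (lborel \<Otimes>\<^sub>M lborel)"
  proof -
    have N1: "N \<in> sets lborel" "emeasure lborel N = 0" using N(1) by (auto simp: null_sets_def)
    have S: "N \<times> (UNIV :: 'b set) \<in> sets (lborel \<Otimes>\<^sub>M lborel)"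
      using N1(1) by (intro pair_measureI) auto
    have "emeasure (lborel \<Otimes>\<^sub>M lborel) (N \<times> (UNIV :: 'b set)) = emeasure lborel N * emeasure lborel (UNIV :: 'b set)"
      using N1(1) by (intro lborel.emeasure_pair_measure_Times) auto
    then show ?thesis using S N1(2) by (simp add: null_sets_def)
  qed
  have "AE z::'a\<times>'b in lborel \<Otimes>\<^sub>M lborel. q (fst z) = q' (fst z)"
  proof (rule AE_I'[OF NT])
    show "{x \<in> space (lborel \<Otimes>\<^sub>M lborel). q (fst x) \<noteq> q' (fst x)} \<subseteq> N \<times> UNIV"
      using N(2) by (auto simp: space_pair_measure)
  qed
  then have ae: "AE z::'a\<times>'b in lborel. q (fst z) = q' (fst z)" by (simp only: lborel_prod)
  have "(\<lambda>z::'a \<times> 'b. q' (fst z)) \<in> borel_measurable lborel"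
  proof -
    have "q' \<in> borel \<rightarrow>\<^sub>M borel" using q'(1) by simp
    from measurable_compose[OF measurable_fst[of borel borel] this]
    have "(\<lambda>z::'a \<times> 'b. q' (fst z)) \<in> borel \<Otimes>\<^sub>M borel \<rightarrow>\<^sub>M borel" by (simp add: comp_def)
    then show ?thesis by (simp add: borel_prod)
  qed
  then show ?thesis using ae by (rule measurable_completion_AE) simp
qed




lemma orth_trans:
  fixes A :: "real^3^3"
  assumes "orthogonal_matrix A"
  shows "orthogonal_transformation ((*v) A)"
  using assms by (simp add: orthogonal_transformation_matrix)

lemma orth_inv:
  fixes A :: "real^3^3"
  assumes "orthogonal_matrix A"
  shows "A *v (transpose A *v x) = x" "transpose A *v (A *v x) = x"
proof -
  have "A *v (transpose A *v x) = (A ** transpose A) *v x" by (rule matrix_vector_mul_assoc)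
  then show "A *v (transpose A *v x) = x" using assms by (simp add: orthogonal_matrix_def)
  have "transpose A *v (A *v x) = (transpose A ** A) *v x" by (rule matrix_vector_mul_assoc)
  then show "transpose A *v (A *v x) = x" using assms by (simp add: orthogonal_matrix_def)
qed

lemma distr_orth:
  fixes A :: "real^3^3"
  assumes A: "orthogonal_matrix A"
  shows "distr lborel lborel ((*v) A) = lborel"
proof -
  have Tm: "((*v) A) \<in> borel_measurable borel"
    by (intro borel_measurable_continuous_onI linear_continuous_on) simp
  show ?thesis
  proof (rule lborel_eqI[symmetric])
    fix l u :: "real^3" assume le: "\<And>b. b \<in> Basis \<Longrightarrow> l \<bullet> b \<le> u \<bullet> b"
    let ?Ti = "(*v) (transpose A)"
    have pre: "(*v) A -` box l u = ?Ti ` box l u"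
      using orth_inv[OF A] by (auto simp: image_iff) (metis)
    have preS: "(*v) A -` box l u \<in> sets lborel"
      using Tm by (simp add: measurable_sets_borel)
    have oT: "orthogonal_transformation ?Ti"
      using A by (intro orth_trans) simp
    have "emeasure (distr lborel lborel ((*v) A)) (box l u) = emeasure lborel ((*v) A -` box l u)"
      using Tm by (simp add: emeasure_distr)
    also have "\<dots> = emeasure lebesgue (?Ti ` box l u)"
      using preS pre by simp
    also have "\<dots> = measure lebesgue (?Ti ` box l u)"
      using measurable_orthogonal_image[OF oT lmeasurable_box] by (simp add: emeasure_eq_measure2)
    also have "\<dots> = measure lebesgue (box l u)"
      using measure_orthogonal_image[OF oT lmeasurable_box] by simp
    also have "\<dots> = emeasure lebesgue (box l u)"
      by (simp add: emeasure_eq_measure2)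
    also have "\<dots> = emeasure lborel (box l u)" by simp
    also have "\<dots> = (\<Prod>b\<in>Basis. (u - l) \<bullet> b)" using le by simp
    finally show "emeasure (distr lborel lborel ((*v) A)) (box l u) = (\<Prod>b\<in>Basis. (u - l) \<bullet> b)" .
  qed simp
qed

lemma nn_integral_orth_le:
  fixes A :: "real^3^3" and g :: "real^3 \<Rightarrow> ennreal"
  assumes A: "orthogonal_matrix A"
  shows "(\<integral>\<^sup>+v. g v \<partial>lborel) \<le> (\<integral>\<^sup>+v. g (A *v v) \<partial>lborel)"
proof -
  have Tm: "((*v) A) \<in> lborel \<rightarrow>\<^sub>M lborel"
    by (simp, intro borel_measurable_continuous_onI linear_continuous_on) simp
  show ?thesis
    unfolding nn_integral_def[of lborel g]
  proof (rule SUP_least)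
    fix s assume s: "s \<in> {s. simple_function lborel s \<and> s \<le> g}"
    then have sm: "s \<in> borel_measurable lborel" using borel_measurable_simple_function[of lborel s] by auto
    have "integral\<^sup>S lborel s = (\<integral>\<^sup>+v. s v \<partial>lborel)"
      using s by (simp add: nn_integral_eq_simple_integral)
    also have "\<dots> = (\<integral>\<^sup>+v. s v \<partial>distr lborel lborel ((*v) A))"
      by (simp add: distr_orth[OF A])
    also have "\<dots> = (\<integral>\<^sup>+v. s (A *v v) \<partial>lborel)"
      using Tm sm by (subst nn_integral_distr) (auto simp: distr_orth[OF A])
    also have "\<dots> \<le> (\<integral>\<^sup>+v. g (A *v v) \<partial>lborel)"
      using s by (intro nn_integral_mono) (auto simp: le_fun_def)
    finally show "integral\<^sup>S lborel s \<le> (\<integral>\<^sup>+v. g (A *v v) \<partial>lborel)" .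
  qed
qed

lemma nn_integral_orth:
  fixes A :: "real^3^3" and g :: "real^3 \<Rightarrow> ennreal"
  assumes A: "orthogonal_matrix A"
  shows "(\<integral>\<^sup>+v. g (A *v v) \<partial>lebesgue) = (\<integral>\<^sup>+v. g v \<partial>lebesgue)"
proof -
  have "(\<integral>\<^sup>+v. g (A *v v) \<partial>lborel) \<le> (\<integral>\<^sup>+v. g (A *v (transpose A *v v)) \<partial>lborel)"
    using A by (intro nn_integral_orth_le) simp
  also have "\<dots> = (\<integral>\<^sup>+v. g v \<partial>lborel)" by (simp only: orth_inv[OF A])
  finally show ?thesis using nn_integral_orth_le[OF A, of g]
    by (simp add: nn_integral_completion)
qed



definition ww :: "real^3 \<Rightarrow> real" where "ww v = sqrt (1 + (norm v)\<^sup>2)"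
definition Phi :: "real \<Rightarrow> real \<Rightarrow> real^3 \<Rightarrow> real" where
  "Phi k c v = (max 0 (1 - c * ww v)) powr k"
definition hh :: "real \<Rightarrow> real \<Rightarrow> ennreal" where
  "hh k c = (\<integral>\<^sup>+v. ennreal (ww v * Phi k c v) \<partial>lebesgue)"

lemma ww_ge1: "ww v \<ge> 1" unfolding ww_def by simp
lemma ww_ge_norm: "ww v \<ge> norm v" unfolding ww_def by (simp add: real_le_rsqrt)
lemma ww_pos: "ww v > 0" using ww_ge1[of v] by simp
lemma ww_le: "ww v \<le> 1 + norm v"
  unfolding ww_def by (rule real_le_lsqrt) (auto simp: power2_eq_square algebra_simps)

lemma ww_meas[measurable]: "ww \<in> borel_measurable borel"
  unfolding ww_def by measurable

lemma Phi_nonneg: "Phi k c v \<ge> 0" unfolding Phi_def by simp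

lemma Phi_le1: assumes "k > 0" "c \<ge> 0" shows "Phi k c v \<le> 1"
proof -
  have "max 0 (1 - c * ww v) \<le> 1" using assms ww_pos[of v] by simp
  then show ?thesis unfolding Phi_def using assms by (simp add: powr_le1)
qed

lemma Phi_zero: assumes "c * ww v \<ge> 1" shows "Phi k c v = 0"
  using assms unfolding Phi_def by simp

lemma Phi_antimono: assumes "k > 0" "c \<le> c'" shows "Phi k c' v \<le> Phi k c v"
proof -
  have "max 0 (1 - c' * ww v) \<le> max 0 (1 - c * ww v)"
  proof -
    have "c * ww v \<le> c' * ww v" using assms ww_pos[of v] by (intro mult_right_mono) auto
    then show ?thesis by simp
  qed
  then show ?thesis unfolding Phi_def using assms by (intro powr_mono2) auto
qed

lemma Phi_meas[measurable (raw)]: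
  assumes [measurable]: "f \<in> borel_measurable M" "g \<in> M \<rightarrow>\<^sub>M borel"
  shows "(\<lambda>x. Phi k (f x) (g x)) \<in> borel_measurable M"
proof -
  have [measurable]: "(\<lambda>x. ww (g x)) \<in> borel_measurable M"
    using measurable_compose[OF assms(2) ww_meas] by (simp add: comp_def)
  show ?thesis unfolding Phi_def by measurable
qed

lemma Phi_meas1[measurable]: "Phi k c \<in> borel_measurable borel"
  unfolding Phi_def by measurable

lemma hh_antimono: assumes "k > 0" "c \<le> c'" shows "hh k c' \<le> hh k c"
  unfolding hh_def using Phi_antimono[OF assms] ww_pos
  by (intro nn_integral_mono ennreal_leI mult_left_mono) (auto intro: less_imp_le)

lemma hh_one: assumes "c \<ge> 1" shows "hh k c = 0"
proof -
  have "Phi k c v = 0" for v using assms ww_ge1[of v]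
    by (intro Phi_zero) (metis mult_mono' mult_1 zero_le_one order_trans ww_pos less_imp_le)
  then show ?thesis unfolding hh_def by simp
qed



lemma hh_lborel: "hh k c = (\<integral>\<^sup>+v. ennreal (ww v * Phi k c v) \<partial>lborel)"
  unfolding hh_def by (simp add: nn_integral_completion)

lemma hh_bound:
  assumes k: "k > 0" and c0: "c0 > 0" and c: "c \<ge> c0"
  shows "ennreal (ww v * Phi k c v) \<le> ennreal (sqrt (1 + (1/c0)\<^sup>2)) * indicator (cball 0 (1/c0)) v"
proof (cases "norm v \<le> 1/c0")
  case True
  have "ww v \<le> sqrt (1 + (1/c0)\<^sup>2)" unfolding ww_def
    using True by (intro real_sqrt_le_mono add_left_mono power_mono) auto
  moreover have "Phi k c v \<le> 1" using Phi_le1[OF k, of c v] c c0 by simp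
  ultimately have "ww v * Phi k c v \<le> sqrt (1 + (1/c0)\<^sup>2)"
    using ww_pos[of v] Phi_nonneg[of k c v] mult_mono[of "ww v" "sqrt (1 + (1/c0)\<^sup>2)" "Phi k c v" 1] by simp
  then show ?thesis using True by (simp add: mem_cball dist_norm ennreal_leI)
next
  case False
  then have "ww v > 1/c0" using ww_ge_norm[of v] by simp
  then have "c0 * ww v > 1" using c0 by (simp add: field_simps)
  moreover have "c0 * ww v \<le> c * ww v" using c ww_pos[of v] by (intro mult_right_mono) auto
  ultimately have "Phi k c v = 0" by (intro Phi_zero) simp
  then show ?thesis by simp
qed

lemma hh_cont:
  assumes k: "k > 0" and c0: "c0 > 0"
  shows "continuous_on {c0..} (hh k)"
proof (rule continuous_on_sequentiallyI)
  fix u :: "nat \<Rightarrow> real" and a assume u: "\<forall>n. u n \<in> {c0..}" and a: "a \<in> {c0..}" and lim: "u \<longlonglongrightarrow> a"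
  let ?B = "\<lambda>v::real^3. ennreal (sqrt (1 + (1/c0)\<^sup>2)) * indicator (cball 0 (1/c0)) v"
  have "(\<lambda>n. \<integral>\<^sup>+v. ennreal (ww v * Phi k (u n) v) \<partial>lborel) \<longlonglongrightarrow> (\<integral>\<^sup>+v. ennreal (ww v * Phi k a v) \<partial>lborel)"
  proof (rule nn_integral_dominated_convergence[where w = ?B])
    show "\<And>i. (\<lambda>v. ennreal (ww v * Phi k (u i) v)) \<in> borel_measurable lborel" by measurable
    show "(\<lambda>v. ennreal (ww v * Phi k a v)) \<in> borel_measurable lborel" by measurable
    have [measurable]: "cball (0::real^3) (1/c0) \<in> sets borel" by simp
    show "?B \<in> borel_measurable lborel"
      by (intro borel_measurable_times_ennreal borel_measurable_const borel_measurable_indicator) simp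
    show "AE v in lborel. ennreal (ww v * Phi k (u j) v) \<le> ?B v" for j
      using hh_bound[OF k c0, of "u j"] u by auto
    show "(\<integral>\<^sup>+v. ?B v \<partial>lborel) < \<infinity>"
    proof -
      have "emeasure lborel (cball (0::real^3) (1/c0)) < \<infinity>" by (rule emeasure_lborel_cball_finite)
      then show ?thesis
        by (subst nn_integral_cmult_indicator) (auto simp: ennreal_mult_less_top)
    qed
    show "AE v in lborel. (\<lambda>i. ennreal (ww v * Phi k (u i) v)) \<longlonglongrightarrow> ennreal (ww v * Phi k a v)"
    proof (intro AE_I2 tendsto_ennrealI tendsto_mult tendsto_const)
      fix v
      show "(\<lambda>i. Phi k (u i) v) \<longlonglongrightarrow> Phi k a v"
        unfolding Phi_def using k
        by (intro tendsto_powr' tendsto_max tendsto_diff tendsto_mult lim tendsto_const) auto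
    qed
  qed
  then show "(\<lambda>n. hh k (u n)) \<longlonglongrightarrow> hh k a" by (simp add: hh_lborel)
qed



lemma hh_big:
  assumes k: "k > 0"
  shows "\<exists>c0. 0 < c0 \<and> c0 \<le> 1 \<and> hh k c0 \<ge> 1"
proof -
  define t where "t = 2 powr k"
  have t1: "t \<ge> 1" unfolding t_def using k by (intro ge_one_powr_ge_zero) auto
  define c0 where "c0 = 1 / (2 * (1 + 3 * t))"
  have c0pos: "c0 > 0" using t1 by (simp add: c0_def)
  have c0le: "c0 \<le> 1" using t1 by (simp add: c0_def field_simps)
  define l :: "real^3" where "l = (\<chi> i. - t)"
  define u :: "real^3" where "u = (\<chi> i. t)"
  have bnd: "ennreal ((1/2) powr k) * indicator (cbox l u) v \<le> ennreal (ww v * Phi k c0 v)" for v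
  proof (cases "v \<in> cbox l u")
    case True
    then have "\<bar>v $ i\<bar> \<le> t" for i unfolding mem_box_cart l_def u_def
      by (metis abs_le_iff minus_le_iff vec_lambda_beta)
    then have "(\<Sum>i\<in>UNIV. \<bar>v $ i\<bar>) \<le> (\<Sum>i\<in>(UNIV::3 set). t)" by (intro sum_mono) auto
    then have "norm v \<le> 3 * t" using norm_le_l1_cart[of v] by simp
    then have "ww v \<le> 1 + 3 * t" using ww_le[of v] by simp
    then have "c0 * ww v \<le> 1/2" unfolding c0_def using t1 by (simp add: field_simps)
    then have "1/2 \<le> max 0 (1 - c0 * ww v)" by simp
    then have "(1/2) powr k \<le> Phi k c0 v" unfolding Phi_def
      using powr_mono2[of k "1/2" "max 0 (1 - c0 * ww v)"] k by linarith
    moreover have "Phi k c0 v \<le> ww v * Phi k c0 v"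
      using ww_ge1[of v] Phi_nonneg[of k c0 v] mult_right_mono[of 1 "ww v" "Phi k c0 v"] by simp
    ultimately show ?thesis using True by (simp add: ennreal_leI)
  qed simp
  have F1: "ennreal ((1/2) powr k) * emeasure lborel (cbox l u) \<le> hh k c0"
    unfolding hh_lborel
    by (subst nn_integral_cmult_indicator[symmetric]) (auto intro!: nn_integral_mono bnd)
  have F2: "emeasure lborel (cbox l u) = ennreal ((2 * t) ^ 3)"
  proof -
    have "l \<in> cbox l u" using t1 by (simp add: mem_box_cart l_def u_def)
    then have ne: "cbox l u \<noteq> {}" by auto
    have "emeasure lborel (cbox l u) = ennreal (measure lborel (cbox l u))"
      by (simp add: emeasure_eq_measure2)
    also have "measure lborel (cbox l u) = (\<Prod>i\<in>(UNIV::3 set). 2 * t)"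
      using ne by (simp add: content_cbox_cart l_def u_def)
    also have "\<dots> = (2 * t) ^ 3" by simp
    finally show ?thesis .
  qed
  have F3: "(1/2) powr k * (2 * t) ^ 3 \<ge> 1"
  proof -
    have tt: "1 \<le> t * t" using mult_mono[OF t1 t1] t1 by simp
    have "t \<le> t * t * t" using mult_left_mono[OF tt, of t] t1 by simp
    moreover have "(2 * t) ^ 3 = 8 * (t * t * t)" by (simp add: power3_eq_cube)
    ultimately have "(2 * t) ^ 3 \<ge> t" using t1 by linarith
    then have "(1/2) powr k * (2 * t) ^ 3 \<ge> (1/2) powr k * t" by (intro mult_left_mono) auto
    moreover have "(1/2) powr k * t = 1" unfolding t_def using powr_mult[of "1/2" 2 k] by simp
    ultimately show ?thesis by simp
  qed
  have "hh k c0 \<ge> 1"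
  proof -
    have "ennreal 1 \<le> ennreal ((1/2) powr k * (2 * t) ^ 3)" using F3 by (rule ennreal_leI)
    also have "\<dots> = ennreal ((1/2) powr k) * ennreal ((2 * t) ^ 3)"
      using t1 by (intro ennreal_mult) auto
    finally show ?thesis using F1 F2 by simp
  qed
  then show ?thesis using c0pos c0le by blast
qed



lemma exists_C:
  assumes k: "k > 0"
  shows "\<exists>C. (\<forall>r. 0 < C r \<and> C r \<le> 1 \<and> hh k (C r) = ennreal (max 0 (min 1 r))) \<and> C \<in> borel_measurable borel"
proof -
  obtain c0 where c0: "0 < c0" "c0 \<le> 1" "hh k c0 \<ge> 1" using hh_big[OF k] by blast
  have cont: "continuous_on {c0..1} (hh k)"
    using hh_cont[OF k c0(1)] by (rule continuous_on_subset) auto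
  have ex: "\<exists>c. c0 \<le> c \<and> c \<le> 1 \<and> hh k c = ennreal r" if r: "0 \<le> r" "r \<le> 1" for r
  proof (rule IVT2'[of "hh k" 1 "ennreal r" c0])
    show "hh k 1 \<le> ennreal r" by (simp add: hh_one)
    show "ennreal r \<le> hh k c0" using c0(3) r by (metis ennreal_le_1 order_trans)
  qed (use c0 cont in auto)
  define cl where "cl r = max 0 (min 1 r)" for r :: real
  define C where "C r = (SOME c. c0 \<le> c \<and> c \<le> 1 \<and> hh k c = ennreal (cl r))" for r
  have CP: "c0 \<le> C r \<and> C r \<le> 1 \<and> hh k (C r) = ennreal (cl r)" for r
    unfolding C_def by (rule someI_ex, rule ex) (auto simp: cl_def)
  have anti: "C r2 \<le> C r1" if le: "r1 \<le> r2" for r1 r2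
  proof (cases "cl r1 = cl r2")
    case True then show ?thesis by (simp add: C_def)
  next
    case False
    then have lt: "cl r1 < cl r2" using le by (auto simp: cl_def)
    show ?thesis
    proof (rule ccontr)
      assume "\<not> C r2 \<le> C r1"
      then have "hh k (C r2) \<le> hh k (C r1)" using k by (intro hh_antimono) auto
      then have "ennreal (cl r2) \<le> ennreal (cl r1)" using CP by simp
      then have "cl r2 \<le> cl r1" by (subst (asm) ennreal_le_iff) (auto simp: cl_def)
      then show False using lt by simp
    qed
  qed
  have "mono (\<lambda>r. - C r)" by (rule monoI) (simp add: anti)
  then have "(\<lambda>r. - C r) \<in> borel_measurable borel" by (rule borel_measurable_mono)
  then have "(\<lambda>r. - (- C r)) \<in> borel_measurable borel" by measurable
  then have "C \<in> borel_measurable borel" by simp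
  moreover have "0 < C r \<and> C r \<le> 1 \<and> hh k (C r) = ennreal (max 0 (min 1 r))" for r
    using CP[of r] c0(1) by (auto simp: cl_def)
  ultimately show ?thesis by blast
qed



lemma fst_leb[measurable]: "fst \<in> (lebesgue :: ((real^3) \<times> (real^3)) measure) \<rightarrow>\<^sub>M borel"
proof -
  have "fst \<in> (borel :: ((real^3) \<times> (real^3)) measure) \<rightarrow>\<^sub>M borel"
    by (intro borel_measurable_continuous_onI continuous_on_fst continuous_on_id)
  then show ?thesis by (intro measurable_completion) simp
qed

lemma snd_leb[measurable]: "snd \<in> (lebesgue :: ((real^3) \<times> (real^3)) measure) \<rightarrow>\<^sub>M borel"
proof -
  have "snd \<in> (borel :: ((real^3) \<times> (real^3)) measure) \<rightarrow>\<^sub>M borel"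
    by (intro borel_measurable_continuous_onI continuous_on_snd continuous_on_id)
  then show ?thesis by (intro measurable_completion) simp
qed

lemma dens_meas:
  assumes "meas_density g"
  shows "(\<lambda>z. ennreal (sqrt (1 + (norm (snd z))\<^sup>2) * g (fst z) (snd z))) \<in> borel_measurable (lebesgue :: ((real^3) \<times> (real^3)) measure)"
proof -
  have [measurable]: "(\<lambda>z. g (fst z) (snd z)) \<in> borel_measurable (lebesgue :: ((real^3) \<times> (real^3)) measure)"
    using assms by (simp add: meas_density_def)
  show ?thesis by measurable
qed

lemma total_mass_rho:
  assumes "meas_density g"
  shows "total_mass g = (\<integral>\<^sup>+x. rho g x \<partial>lebesgue)"
  unfolding total_mass_def rho_def using tonelli_leb(1)[OF dens_meas[OF assms]] by simp

lemma rho_meas: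
  assumes "meas_density g"
  shows "rho g \<in> borel_measurable lebesgue"
  unfolding rho_def using tonelli_leb(2)[OF dens_meas[OF assms]] by simp

lemma rho_sect:
  assumes "meas_density g"
  shows "AE x in lebesgue. (\<lambda>v. ennreal (sqrt (1 + (norm v)\<^sup>2) * g x v)) \<in> borel_measurable lebesgue"
  using tonelli_leb(3)[OF dens_meas[OF assms]] by simp

lemma mass_in_rho:
  assumes "meas_density g"
  shows "mass_in g r = (\<integral>\<^sup>+x. rho g x * indicator (cball 0 r) x \<partial>lebesgue)"
proof -
  have [measurable]: "cball (0::real^3) r \<in> sets borel" by simp
  have m: "(\<lambda>z. ennreal (sqrt (1 + (norm (snd z))\<^sup>2) * g (fst z) (snd z)) * indicator (cball 0 r) (fst z))
      \<in> borel_measurable (lebesgue :: ((real^3) \<times> (real^3)) measure)"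
    using dens_meas[OF assms] by measurable
  have "mass_in g r = (\<integral>\<^sup>+x. (\<integral>\<^sup>+v. ennreal (sqrt (1 + (norm v)\<^sup>2) * g x v) * indicator (cball 0 r) x \<partial>lebesgue) \<partial>lebesgue)"
    unfolding mass_in_def using tonelli_leb(1)[OF m] by simp
  also have "\<dots> = (\<integral>\<^sup>+x. rho g x * indicator (cball 0 r) x \<partial>lebesgue)"
    by (intro nn_integral_cong) (auto simp: rho_def indicator_def)
  finally show ?thesis .
qed

lemma rho_orth:
  assumes "sph_sym g" "orthogonal_matrix A" "det A = 1"
  shows "rho g (A *v x) = rho g x"
proof -
  have n: "norm (A *v v) = norm v" for v
    using orthogonal_transformation_norm[OF orth_trans[OF assms(2)]] by simp
  have s: "g (A *v x) (A *v v) = g x v" for v using assms unfolding sph_sym_def by blast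
  have "rho g x = (\<integral>\<^sup>+v. ennreal (sqrt (1 + (norm (A *v v))\<^sup>2) * g (A *v x) (A *v v)) \<partial>lebesgue)"
    unfolding rho_def by (simp add: n s)
  also have "\<dots> = rho g (A *v x)"
    unfolding rho_def by (rule nn_integral_orth[OF assms(2), of "\<lambda>v. ennreal (sqrt (1 + (norm v)\<^sup>2) * g (A *v x) v)"])
  finally show ?thesis by simp
qed



lemma ereal_fin:
  fixes a a' b b' :: ennreal
  assumes le: "a + b' \<le> a' + b" and b: "b < \<infinity>" and b': "b' < \<infinity>"
  shows "enn2ereal a - enn2ereal b \<le> enn2ereal a' - enn2ereal b'"
proof (cases "a' = \<infinity>")
  case True
  then show ?thesis using b' by (cases b' rule: ennreal_cases) auto
next
  case False
  then have "a < \<infinity>" using le b by (metis add_top ennreal_add_eq_top infinity_ennreal_def le_less_trans less_le top.extremum_strict top_greatest) 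
  then show ?thesis using le b b' False
    by (cases a rule: ennreal_cases; cases a' rule: ennreal_cases; cases b rule: ennreal_cases; cases b' rule: ennreal_cases)
       (auto simp flip: ennreal_plus)
qed

lemma mass_in_mono: "r1 \<le> r2 \<Longrightarrow> mass_in g r1 \<le> mass_in g r2"
  unfolding mass_in_def
  by (intro nn_integral_mono mult_left_mono) (auto simp: indicator_def mem_cball)

lemma mass_in_le_total: "mass_in g r \<le> total_mass g"
  unfolding mass_in_def total_mass_def
  by (intro nn_integral_mono) (auto simp: indicator_def)

lemma exp_lambda_props:
  assumes tm: "total_mass g = ennreal M" and mb: "\<forall>r>0. mass_in g r \<le> ennreal (\<beta> * r)"
    and b0: "0 < \<beta>" and b1: "\<beta> < 1/2"
  shows "exp_lambda g \<in> borel_measurable borel"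
    and "\<And>r. 0 \<le> r \<Longrightarrow> 0 < exp_lambda g r \<and> exp_lambda g r \<le> 1 / sqrt (1 - 2 * \<beta>)"
proof -
  define mr where "mr r = enn2real (mass_in g r)" for r
  have fin: "mass_in g r < \<infinity>" for r using mass_in_le_total[of g r] tm by (simp add: le_less_trans)
  have "mono mr" unfolding mr_def
    by (rule monoI, rule enn2real_mono) (use fin in \<open>auto simp: mass_in_mono\<close>)
  then have [measurable]: "mr \<in> borel_measurable borel" by (rule borel_measurable_mono)
  have eq: "exp_lambda g = (\<lambda>r. if r = 0 then 1 else 1 / sqrt (1 - 2 * mr r / r))"
    by (simp add: exp_lambda_def mr_def fun_eq_iff)
  show "exp_lambda g \<in> borel_measurable borel" unfolding eq by measurable
  fix r :: real assume r: "0 \<le> r"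
  have sq: "0 < sqrt (1 - 2 * \<beta>)" "sqrt (1 - 2 * \<beta>) \<le> 1" using b0 b1 by auto
  show "0 < exp_lambda g r \<and> exp_lambda g r \<le> 1 / sqrt (1 - 2 * \<beta>)"
  proof (cases "r = 0")
    case True
    then show ?thesis using sq by (simp add: eq field_simps)
  next
    case False
    then have rp: "r > 0" using r by simp
    have "mr r \<le> \<beta> * r" unfolding mr_def
      using mb rp b0 by (metis enn2real_ennreal enn2real_mono ennreal_less_top less_imp_le mult_nonneg_nonneg)
    moreover have "mr r \<ge> 0" by (simp add: mr_def)
    ultimately have "2 * mr r / r \<le> 2 * \<beta>" using rp by (simp add: field_simps)
    then have "1 - 2 * \<beta> \<le> 1 - 2 * mr r / r" by simp
    then have "sqrt (1 - 2 * \<beta>) \<le> sqrt (1 - 2 * mr r / r)" by (rule real_sqrt_le_mono)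
    then show ?thesis using sq False by (simp add: eq divide_left_mono)
  qed
qed



lemma chi_meas[measurable]: "chi k \<in> borel_measurable borel"
  unfolding chi_def by measurable

lemma chi_nonneg: "s \<ge> 0 \<Longrightarrow> k > 0 \<Longrightarrow> chi k s \<ge> 0"
  unfolding chi_def by simp

lemma K_rho:
  fixes e :: "real^3 \<Rightarrow> real"
  assumes md: "meas_density g" and gnn: "\<forall>x v. 0 \<le> g x v" and enn: "\<forall>x. 0 \<le> e x"
    and em: "(\<lambda>z::(real^3) \<times> (real^3). e (fst z)) \<in> borel_measurable lebesgue"
  shows "(\<integral>\<^sup>+z. ennreal (e (fst z) * ww (snd z) * g (fst z) (snd z)) \<partial>lebesgue)
       = (\<integral>\<^sup>+x. ennreal (e x) * rho g x \<partial>lebesgue)"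
proof -
  have [measurable]: "(\<lambda>z. g (fst z) (snd z)) \<in> borel_measurable (lebesgue :: ((real^3) \<times> (real^3)) measure)"
    using md by (simp add: meas_density_def)
  have [measurable]: "(\<lambda>z::(real^3) \<times> (real^3). e (fst z)) \<in> borel_measurable lebesgue" by (fact em)
  have m: "(\<lambda>z::(real^3) \<times> (real^3). ennreal (e (fst z) * ww (snd z) * g (fst z) (snd z))) \<in> borel_measurable lebesgue"
    by measurable
  have "(\<integral>\<^sup>+z. ennreal (e (fst z) * ww (snd z) * g (fst z) (snd z)) \<partial>lebesgue)
      = (\<integral>\<^sup>+x. (\<integral>\<^sup>+v. ennreal (e x * ww v * g x v) \<partial>lebesgue) \<partial>lebesgue)"
    using tonelli_leb(1)[OF m] by simp
  also have "\<dots> = (\<integral>\<^sup>+x. ennreal (e x) * rho g x \<partial>lebesgue)"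
  proof (rule nn_integral_cong_AE)
    show "AE x in lebesgue. (\<integral>\<^sup>+v. ennreal (e x * ww v * g x v) \<partial>lebesgue) = ennreal (e x) * rho g x"
      using rho_sect[OF md]
    proof eventually_elim
      case (elim x)
      have "(\<integral>\<^sup>+v. ennreal (e x * ww v * g x v) \<partial>lebesgue)
          = (\<integral>\<^sup>+v. ennreal (e x) * ennreal (sqrt (1 + (norm v)\<^sup>2) * g x v) \<partial>lebesgue)"
        using enn gnn ww_pos by (intro nn_integral_cong) (simp add: ww_def ennreal_mult[symmetric] mult.assoc)
      also have "\<dots> = ennreal (e x) * rho g x"
        unfolding rho_def using elim by (rule nn_integral_cmult)
      finally show ?case .
    qed
  qed
  finally show ?thesis .
qed

lemma B_bound:
  assumes md: "meas_density g" and gnn: "\<forall>x v. 0 \<le> g x v"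
    and Eb: "\<forall>x. E x \<le> Emax" "\<forall>x. 0 \<le> E x"
  shows "(\<integral>\<^sup>+z. ennreal (E (fst z) * g (fst z) (snd z)) \<partial>lebesgue) \<le> ennreal Emax * total_mass g"
proof -
  have "(\<integral>\<^sup>+z. ennreal (E (fst z) * g (fst z) (snd z)) \<partial>lebesgue)
      \<le> (\<integral>\<^sup>+z. ennreal Emax * ennreal (sqrt (1 + (norm (snd z))\<^sup>2) * g (fst z) (snd z)) \<partial>lebesgue)"
  proof (intro nn_integral_mono)
    fix z :: "(real^3) \<times> (real^3)"
    have g0: "0 \<le> g (fst z) (snd z)" using gnn by simp
    have w1: "1 \<le> sqrt (1 + (norm (snd z))\<^sup>2)" by simp
    have "E (fst z) * g (fst z) (snd z) \<le> Emax * (1 * g (fst z) (snd z))"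
      using Eb g0 by (simp add: mult_right_mono)
    also have "\<dots> \<le> Emax * (sqrt (1 + (norm (snd z))\<^sup>2) * g (fst z) (snd z))"
      using w1 g0 Eb order_trans[OF Eb(2)[rule_format] Eb(1)[rule_format]]
      by (intro mult_left_mono mult_right_mono) auto
    finally show "ennreal (E (fst z) * g (fst z) (snd z))
        \<le> ennreal Emax * ennreal (sqrt (1 + (norm (snd z))\<^sup>2) * g (fst z) (snd z))"
      using g0 order_trans[OF Eb(2)[rule_format] Eb(1)[rule_format]]
      by (simp add: ennreal_mult[symmetric] ennreal_leI)
  qed
  also have "\<dots> = ennreal Emax * total_mass g"
    unfolding total_mass_def using dens_meas[OF md] by (rule nn_integral_cmult)
  finally show ?thesis .
qed



theorem lemma3p1:
  fixes k M \<beta> :: real and f :: "real^3 \<Rightarrow> real^3 \<Rightarrow> real"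
  assumes "k > 0" and "M > 0" and "0 < \<beta>" and "\<beta> < 1/2"
    and "sph_sym f" and "\<forall>x v. 0 \<le> f x v"
    and "f \<in> A_tilde M \<beta>"
  shows "\<exists>fh :: real^3 \<Rightarrow> real^3 \<Rightarrow> real.
           meas_density fh \<and> sph_sym fh \<and> (\<forall>x v. 0 \<le> fh x v) \<and>
           (\<forall>x. rho fh x = rho f x) \<and> fh \<in> A_tilde M \<beta> \<and>
           Dfun k fh \<le> Dfun k f \<and>
           (\<forall>x v. fh x v \<le> 1)"
proof -
  note k = assms(1) and b0 = assms(3) and b1 = assms(4) and ss = assms(5) and fnn = assms(6)
  from assms(7) have fmd: "meas_density f" and tm: "total_mass f = ennreal M"
    and mb: "\<forall>r>0. mass_in f r \<le> ennreal (\<beta> * r)" and rle: "\<forall>x. rho f x \<le> 1"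
    unfolding A_tilde_def by auto
  obtain C where CP: "\<And>r. 0 < C r \<and> C r \<le> 1 \<and> hh k (C r) = ennreal (max 0 (min 1 r))"
    and Cm: "C \<in> borel_measurable borel"
    using exists_C[OF k] by blast
  define q where "q x = enn2real (rho f x)" for x
  have [measurable]: "rho f \<in> borel_measurable lebesgue" by (rule rho_meas[OF fmd])
  have qm: "q \<in> borel_measurable lebesgue" unfolding q_def by measurable
  define c where "c x = C (q x)" for x
  have cm: "c \<in> borel_measurable lebesgue"
    unfolding c_def using measurable_compose[OF qm Cm] by (simp add: comp_def)
  have czm[measurable]: "(\<lambda>z::(real^3) \<times> (real^3). c (fst z)) \<in> borel_measurable lebesgue"
    by (rule lift_fst_measurable[OF cm])
  have cpos: "0 < c x" "c x \<le> 1" for x using CP[of "q x"] by (auto simp: c_def)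
  define fh where "fh x v = Phi k (c x) v" for x v
  have q01: "0 \<le> q x" "q x \<le> 1" for x
  proof -
    show "0 \<le> q x" by (simp add: q_def)
    have "rho f x \<le> 1" using rle by simp
    then show "q x \<le> 1" unfolding q_def using enn2real_mono[of "rho f x" 1] by simp
  qed
  have rho_eq: "rho fh x = rho f x" for x
  proof -
    have "rho fh x = hh k (c x)" by (simp add: rho_def hh_def fh_def ww_def)
    also have "\<dots> = ennreal (q x)" using CP[of "q x"] q01[of x] by (simp add: c_def)
    also have "\<dots> = rho f x" unfolding q_def using rle[rule_format, of x]
      by (intro ennreal_enn2real) (metis ennreal_1 ennreal_less_top le_less_trans)
    finally show ?thesis .
  qed
  have fhnn: "\<forall>x v. 0 \<le> fh x v" by (simp add: fh_def Phi_nonneg)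
  have fhle: "\<forall>x v. fh x v \<le> 1" using Phi_le1[OF k] cpos by (simp add: fh_def less_imp_le)
  have fhm[measurable]: "(\<lambda>z::(real^3) \<times> (real^3). fh (fst z) (snd z)) \<in> borel_measurable lebesgue"
    unfolding fh_def by measurable
  have fhmd: "meas_density fh" unfolding meas_density_def using fhm by simp
  have fhss: "sph_sym fh"
    unfolding sph_sym_def
  proof (intro allI impI)
    fix A :: "real^3^3" and x v assume A: "orthogonal_matrix A \<and> det A = 1"
    have "q (A *v x) = q x" unfolding q_def using rho_orth[OF ss] A by simp
    moreover have "ww (A *v v) = ww v"
      using orthogonal_transformation_norm[OF orth_trans] A by (simp add: ww_def)
    ultimately show "fh (A *v x) (A *v v) = fh x v" by (simp add: fh_def c_def Phi_def)
  qed
  have mass_eq: "mass_in fh r = mass_in f r" for r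
    by (simp add: mass_in_rho[OF fhmd] mass_in_rho[OF fmd] rho_eq)
  have tm_eq: "total_mass fh = total_mass f"
    by (simp add: total_mass_rho[OF fhmd] total_mass_rho[OF fmd] rho_eq)
  have el_eq: "exp_lambda fh = exp_lambda f"
    by (simp add: fun_eq_iff exp_lambda_def mass_eq)
  have fhA: "fh \<in> A_tilde M \<beta>"
    unfolding A_tilde_def using fhmd fhss fhnn tm_eq tm mass_eq mb rho_eq rle by auto
  define E where "E x = exp_lambda f (norm x)" for x :: "real^3"
  define Emax where "Emax = 1 / sqrt (1 - 2 * \<beta>)"
  have elm: "exp_lambda f \<in> borel_measurable borel"
    using exp_lambda_props(1)[OF tm mb b0 b1] .
  have Eb: "0 < E x" "E x \<le> Emax" for x
    using exp_lambda_props(2)[OF tm mb b0 b1, of "norm x"] by (auto simp: E_def Emax_def)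
  have Em[measurable]: "(\<lambda>z::(real^3) \<times> (real^3). E (fst z)) \<in> borel_measurable lebesgue"
    unfolding E_def using elm by measurable
  have fm[measurable]: "(\<lambda>z. f (fst z) (snd z)) \<in> borel_measurable (lebesgue :: ((real^3) \<times> (real^3)) measure)"
    using fmd by (simp add: meas_density_def)
  define ec where "ec x = E x * c x" for x
  have ecnn: "\<forall>x. 0 \<le> ec x" using Eb cpos by (simp add: ec_def less_imp_le)
  have ecm[measurable]: "(\<lambda>z::(real^3) \<times> (real^3). ec (fst z)) \<in> borel_measurable lebesgue"
    unfolding ec_def by measurable
  let ?A = "\<lambda>g. (\<integral>\<^sup>+z. ennreal (E (fst z) * chi k (g (fst z) (snd z))) \<partial>(lebesgue :: ((real^3) \<times> (real^3)) measure))"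
  let ?B = "\<lambda>g. (\<integral>\<^sup>+z. ennreal (E (fst z) * g (fst z) (snd z)) \<partial>(lebesgue :: ((real^3) \<times> (real^3)) measure))"
  let ?K = "\<lambda>g. (\<integral>\<^sup>+z. ennreal (ec (fst z) * ww (snd z) * g (fst z) (snd z)) \<partial>(lebesgue :: ((real^3) \<times> (real^3)) measure))"
  have pw: "ennreal (E (fst z) * chi k (fh (fst z) (snd z))) + ennreal (E (fst z) * f (fst z) (snd z))
            + ennreal (ec (fst z) * ww (snd z) * fh (fst z) (snd z))
         \<le> ennreal (E (fst z) * chi k (f (fst z) (snd z))) + ennreal (E (fst z) * fh (fst z) (snd z))
            + ennreal (ec (fst z) * ww (snd z) * f (fst z) (snd z))" for z
  proof -
    obtain x v where z: "z = (x, v)" by (cases z)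
    let ?s = "f x v" and ?a = "c x * ww v"
    have s0: "0 \<le> ?s" using fnn by simp
    have a0: "0 < ?a" using cpos[of x] ww_pos[of v] by simp
    have t: "fh x v = (max 0 (1 - ?a)) powr k" by (simp add: fh_def Phi_def)
    have ci: "chi k (fh x v) + ?s + ?a * fh x v \<le> chi k ?s + fh x v + ?a * ?s"
      unfolding t by (rule chi_ineq[OF k s0 a0])
    have E0: "0 \<le> E x" using Eb[of x] by simp
    have "E x * (chi k (fh x v) + ?s + ?a * fh x v) \<le> E x * (chi k ?s + fh x v + ?a * ?s)"
      using mult_left_mono[OF ci E0] .
    then have real_ineq: "E x * chi k (fh x v) + E x * ?s + ec x * ww v * fh x v
        \<le> E x * chi k ?s + E x * fh x v + ec x * ww v * ?s"
      by (simp add: ec_def algebra_simps)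
    have t0: "0 \<le> fh x v" using fhnn by simp
    have nn: "0 \<le> E x * chi k (fh x v)" "0 \<le> E x * ?s" "0 \<le> ec x * ww v * fh x v"
      "0 \<le> E x * chi k ?s" "0 \<le> E x * fh x v" "0 \<le> ec x * ww v * ?s"
      using E0 s0 t0 chi_nonneg[OF s0 k] chi_nonneg[OF t0 k] ecnn ww_pos[of v] by auto
    show ?thesis unfolding z fst_conv snd_conv
      using real_ineq nn by (simp add: ennreal_plus[symmetric] ennreal_leI del: ennreal_plus)
  qed
  have int_ineq: "?A fh + ?B f + ?K fh \<le> ?A f + ?B fh + ?K f"
  proof -
    have "?A fh + ?B f + ?K fh = (\<integral>\<^sup>+z. ennreal (E (fst z) * chi k (fh (fst z) (snd z))) + ennreal (E (fst z) * f (fst z) (snd z))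
            + ennreal (ec (fst z) * ww (snd z) * fh (fst z) (snd z)) \<partial>lebesgue)"
      by (simp add: nn_integral_add)
    also have "\<dots> \<le> (\<integral>\<^sup>+z. ennreal (E (fst z) * chi k (f (fst z) (snd z))) + ennreal (E (fst z) * fh (fst z) (snd z))
            + ennreal (ec (fst z) * ww (snd z) * f (fst z) (snd z)) \<partial>lebesgue)"
      by (intro nn_integral_mono pw)
    also have "\<dots> = ?A f + ?B fh + ?K f"
      by (simp add: nn_integral_add)
    finally show ?thesis .
  qed
  have Kf: "?K f = (\<integral>\<^sup>+x. ennreal (ec x) * rho f x \<partial>lebesgue)"
    by (rule K_rho[OF fmd fnn ecnn ecm])
  have Kfh: "?K fh = (\<integral>\<^sup>+x. ennreal (ec x) * rho f x \<partial>lebesgue)"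
    using K_rho[OF fhmd fhnn ecnn ecm] by (simp add: rho_eq)
  have Kfin: "?K f < \<infinity>"
  proof -
    have "(\<integral>\<^sup>+x. ennreal (ec x) * rho f x \<partial>lebesgue) \<le> (\<integral>\<^sup>+x. ennreal Emax * rho f x \<partial>lebesgue)"
    proof (intro nn_integral_mono mult_right_mono ennreal_leI)
      fix x show "ec x \<le> Emax" using Eb[of x] cpos[of x]
        by (simp add: ec_def) (metis mult_left_mono mult.right_neutral less_imp_le order_trans)
    qed simp
    also have "\<dots> = ennreal Emax * total_mass f"
      by (simp add: nn_integral_cmult total_mass_rho[OF fmd])
    also have "\<dots> < \<infinity>" using tm by (simp add: ennreal_mult_less_top)
    finally show ?thesis using Kf by simp
  qed
  have Eb': "\<forall>x. E x \<le> Emax" "\<forall>x. 0 \<le> E x" using Eb by (auto simp: less_imp_le)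
  have Bf: "?B f < \<infinity>"
    using B_bound[OF fmd fnn Eb'] tm by (simp add: le_less_trans ennreal_mult_less_top)
  have Bfh: "?B fh < \<infinity>"
    using B_bound[OF fhmd fhnn Eb'] tm tm_eq by (simp add: le_less_trans ennreal_mult_less_top)
  have "?A fh + ?B f \<le> ?A f + ?B fh"
  proof -
    have "?K f + (?A fh + ?B f) \<le> ?K f + (?A f + ?B fh)"
      using int_ineq Kf Kfh by (simp add: ac_simps)
    then show ?thesis using Kfin by (auto simp: ennreal_add_left_cancel_le)
  qed
  then have "Dfun k fh \<le> Dfun k f"
    unfolding Dfun_def el_eq E_def[symmetric] by (rule ereal_fin[OF _ Bfh Bf])
  then show ?thesis using fhmd fhss fhnn rho_eq fhA fhle by blast
qed

end
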